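(* Let $n\ge 13$ and let $CT_n$ be the set of chemical trees on $n$ vertices. For a tree $T$ write $\mathbf m(T)=(m_{3,3}(T),m_{2,3}(T),m_{1,2}(T),m_{1,3}(T),m_{2,2}(T))$. For $1\le i\le 13$ let $A_i$ be the set of trees $T\in CT_n$ with $\Delta(T)\le 3$, $n_3(T)\le 2$ and $\mathbf m(T)$ equal to the following vector: $A_1:(0,0,2,0,n-3)$; $A_2:(0,1,1,2,n-5)$; $A_3:(0,2,2,1,n-6)$; $A_4:(0,3,3,0,n-7)$; $A_5:(0,2,0,4,n-7)$; $A_6:(0,3,1,3,n-8)$; $A_7:(0,4,2,2,n-9)$; $A_8:(1,1,1,3,n-7)$; $A_9:(0,5,3,1,n-10)$; $A_{10}:(1,2,2,2,n-8)$; $A_{11}:(0,6,4,0,n-11)$; $A_{12}:(1,3,3,1,n-9)$; $A_{13}:(1,4,4,0,n-10)$. Let $\Omega(n)$ be the set of trees $T\in CT_n$ having $3$ vertices of degree $3$, $n-8$ vertices of degree $2$ and $5$ vertices of degree $1$, with $m_{1,2}(T)=m_{2,3}(T)=5$, $m_{1,3}(T)=0$, $m_{3,3}(T)=2$, $m_{2,2}(T)=n-13$. Let $T_1\in A_1$, $T_2\in A_4$, $T_3\in A_3$, $T_4\in A_2$, $T_5\in A_{13}$, $T_6\in A_{11}$, $T_7\in A_{12}$, $T_8\in A_9$, $T_9\in A_{10}$, $T_{10}\in A_7$, $T_{11}\in A_8$, $T_{12}\in A_6$, $T_{13}\in A_5$, $T_{14}\in\Omega(n)$, and let $T\in CT_n$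 not belong to $A_1\cup\cdots\cup A_{13}\cup\Omega(n)$. Then $SO(T_1)<SO(T_2)<SO(T_3)<\cdots<SO(T_{13})<SO(T_{14})<SO(T)$.
   Context: All graphs are simple and connected. A chemical graph is a graph with maximum degree at most $4$; a chemical tree is a chemical graph that is a tree. $d_G(u)$ is the degree of $u$, $\Delta(G)$ the maximum degree, $n_i(G)$ the number of vertices of degree $i$, and $m_{i,j}(G)$ the number of edges joining a vertex of degree $i$ to a vertex of degree $j$. The Sombor index is $SO(G)=\sum_{uv\in E(G)}\sqrt{d_G(u)^2+d_G(v)^2}$. *)

theory Defs
  imports Complex_Main
begin

type_synonym 'a graph = "'a set \<times> 'a set set"

definition verts :: "'a graph \<Rightarrow> 'a set" where "verts G = fst G"
definition edges :: "'a graph \<Rightarrow> 'a set set" where "edges G = snd G"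

definition simple_graph :: "'a graph \<Rightarrow> bool" where
  "simple_graph G \<longleftrightarrow> finite (verts G) \<and>
     (\<forall>e\<in>edges G. \<exists>u v. e = {u, v} \<and> u \<noteq> v \<and> u \<in> verts G \<and> v \<in> verts G)"

definition adj :: "'a graph \<Rightarrow> 'a \<Rightarrow> 'a \<Rightarrow> bool" where
  "adj G u v \<longleftrightarrow> {u, v} \<in> edges G"

definition connected_graph :: "'a graph \<Rightarrow> bool" where
  "connected_graph G \<longleftrightarrow> verts G \<noteq> {} \<and>
     (\<forall>u\<in>verts G. \<forall>v\<in>verts G. (adj G)\<^sup>*\<^sup>* u v)"

definition is_cycle :: "'a graph \<Rightarrow> 'a list \<Rightarrow> bool" where
  "is_cycle G vs \<longleftrightarrow> length vs \<ge> 3 \<and> distinct vs \<and> set vs \<subseteq> verts G \<and>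
     (\<forall>i. i + 1 < length vs \<longrightarrow> adj G (vs ! i) (vs ! (i + 1))) \<and>
     adj G (last vs) (hd vs)"

definition acyclic_graph :: "'a graph \<Rightarrow> bool" where
  "acyclic_graph G \<longleftrightarrow> (\<nexists>vs. is_cycle G vs)"

definition is_tree :: "'a graph \<Rightarrow> bool" where
  "is_tree G \<longleftrightarrow> simple_graph G \<and> connected_graph G \<and> acyclic_graph G"

definition deg :: "'a graph \<Rightarrow> 'a \<Rightarrow> nat" where
  "deg G u = card {e \<in> edges G. u \<in> e}"

definition max_deg :: "'a graph \<Rightarrow> nat" where
  "max_deg G = Max (deg G ` verts G)"

definition n_deg :: "'a graph \<Rightarrow> nat \<Rightarrow> nat" where
  "n_deg G i = card {v \<in> verts G. deg G v = i}"

definition m_deg :: "'a graph \<Rightarrow> nat \<Rightarrow> nat \<Rightarrow> nat" where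
  "m_deg G i j = card {e \<in> edges G. \<exists>u v. e = {u, v} \<and> u \<noteq> v \<and> deg G u = i \<and> deg G v = j}"

definition sombor :: "'a graph \<Rightarrow> real" where
  "sombor G = (\<Sum>e\<in>edges G. sqrt (\<Sum>x\<in>e. (real (deg G x))\<^sup>2))"

definition chemical_tree :: "'a graph \<Rightarrow> bool" where
  "chemical_tree G \<longleftrightarrow> is_tree G \<and> (\<forall>v\<in>verts G. deg G v \<le> 4)"

definition CT :: "nat \<Rightarrow> 'a graph set" where
  "CT n = {G. chemical_tree G \<and> card (verts G) = n}"

definition mvec :: "'a graph \<Rightarrow> nat \<times> nat \<times> nat \<times> nat \<times> nat" where
  "mvec G = (m_deg G 3 3, m_deg G 2 3, m_deg G 1 2, m_deg G 1 3, m_deg G 2 2)"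

definition Avec :: "nat \<Rightarrow> nat \<Rightarrow> nat \<times> nat \<times> nat \<times> nat \<times> nat" where
  "Avec n i = [(0,0,2,0,n-3), (0,1,1,2,n-5), (0,2,2,1,n-6), (0,3,3,0,n-7),
               (0,2,0,4,n-7), (0,3,1,3,n-8), (0,4,2,2,n-9), (1,1,1,3,n-7),
               (0,5,3,1,n-10), (1,2,2,2,n-8), (0,6,4,0,n-11), (1,3,3,1,n-9),
               (1,4,4,0,n-10)] ! (i - 1)"

definition A :: "nat \<Rightarrow> nat \<Rightarrow> 'a graph set" where
  "A n i = {T \<in> CT n. max_deg T \<le> 3 \<and> n_deg T 3 \<le> 2 \<and> mvec T = Avec n i}"

definition Omega :: "nat \<Rightarrow> 'a graph set" where
  "Omega n = {T \<in> CT n. n_deg T 3 = 3 \<and> n_deg T 2 = n - 8 \<and> n_deg T 1 = 5 \<and>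
     m_deg T 1 2 = 5 \<and> m_deg T 2 3 = 5 \<and> m_deg T 1 3 = 0 \<and> m_deg T 3 3 = 2 \<and>
     m_deg T 2 2 = n - 13}"

end

theory Submission
  imports Defs
begin
lemma sg_edgeE:
  assumes "simple_graph G" "e \<in> edges G"
  obtains u v where "e = {u,v}" "u \<noteq> v" "u \<in> verts G" "v \<in> verts G"
  using assms unfolding simple_graph_def by blast

lemma sg_finite_verts: "simple_graph G \<Longrightarrow> finite (verts G)"
  unfolding simple_graph_def by blast

lemma sg_edges_sub: "simple_graph G \<Longrightarrow> e \<in> edges G \<Longrightarrow> e \<subseteq> verts G"
  by (erule sg_edgeE) auto

lemma sg_finite_edges: "simple_graph G \<Longrightarrow> finite (edges G)"
proof -
  assume sg: "simple_graph G"
  have "edges G \<subseteq> Pow (verts G)" using sg_edges_sub[OF sg] by blast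
  thus ?thesis using sg_finite_verts[OF sg] finite_subset by blast
qed

lemma adj_sym: "adj G u v = adj G v u"
  unfolding adj_def by (simp add: insert_commute)

lemma double_count:
  fixes g :: "'a \<Rightarrow> 'b::comm_semiring_1"
  assumes sg: "simple_graph G"
  shows "(\<Sum>v\<in>verts G. of_nat (deg G v) * g v) = (\<Sum>e\<in>edges G. \<Sum>x\<in>e. g x)"
proof -
  have fV: "finite (verts G)" and fE: "finite (edges G)"
    using sg_finite_verts[OF sg] sg_finite_edges[OF sg] by auto
  have "(\<Sum>v\<in>verts G. of_nat (deg G v) * g v) = (\<Sum>v\<in>verts G. \<Sum>e\<in>edges G. if v \<in> e then g v else 0)"
  proof (rule sum.cong[OF refl])
    fix v assume "v \<in> verts G"
    have "(\<Sum>e\<in>edges G. if v \<in> e then g v else 0) = (\<Sum>e\<in>{e\<in>edges G. v \<in> e}. g v)"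
      using sum.inter_filter[OF fE, of "\<lambda>_. g v" "\<lambda>e. v \<in> e"] by simp
    also have "\<dots> = of_nat (deg G v) * g v" by (simp add: deg_def)
    finally show "of_nat (deg G v) * g v = (\<Sum>e\<in>edges G. if v \<in> e then g v else 0)" by simp
  qed
  also have "\<dots> = (\<Sum>e\<in>edges G. \<Sum>v\<in>verts G. if v \<in> e then g v else 0)"
    by (rule sum.swap)
  also have "\<dots> = (\<Sum>e\<in>edges G. \<Sum>x\<in>e. g x)"
  proof (rule sum.cong[OF refl])
    fix e assume e: "e \<in> edges G"
    have "(\<Sum>v\<in>verts G. if v \<in> e then g v else 0) = (\<Sum>v\<in>{v\<in>verts G. v \<in> e}. g v)"
      using sum.inter_filter[OF fV, of g "\<lambda>v. v \<in> e"] by simp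
    also have "{v\<in>verts G. v \<in> e} = e" using sg_edges_sub[OF sg e] by blast
    finally show "(\<Sum>v\<in>verts G. if v \<in> e then g v else 0) = (\<Sum>x\<in>e. g x)" .
  qed
  finally show ?thesis .
qed

lemma connected_edge:
  assumes c: "connected_graph G" and u: "u \<in> verts G" and v: "v \<in> verts G" and uv: "u \<noteq> v"
  obtains w where "{u,w} \<in> edges G"
proof -
  have "(adj G)\<^sup>*\<^sup>* u v" using c u v unfolding connected_graph_def by blast
  then show ?thesis
  proof (cases rule: converse_rtranclpE)
    case base then show ?thesis using uv by simp
  next
    case (step y) then show ?thesis using that unfolding adj_def by blast
  qed
qed

definition is_path :: "'a graph \<Rightarrow> 'a list \<Rightarrow> bool" where
  "is_path G xs \<longleftrightarrow> length xs \<ge> 2 \<and> distinct xs \<and> set xs \<subseteq> verts G \<and>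
     (\<forall>i. i + 1 < length xs \<longrightarrow> adj G (xs ! i) (xs ! (i + 1)))"

lemma leaf_exists:
  assumes sg: "simple_graph G" and ac: "acyclic_graph G" and ne: "edges G \<noteq> {}"
  shows "\<exists>l e. e \<in> edges G \<and> l \<in> e \<and> (\<forall>e'\<in>edges G. l \<in> e' \<longrightarrow> e' = e)"
proof -
  obtain e0 where e0: "e0 \<in> edges G" using ne by blast
  obtain a b where ab: "e0 = {a,b}" "a \<noteq> b" "a \<in> verts G" "b \<in> verts G"
    using sg_edgeE[OF sg e0] by blast
  have p0: "is_path G [a,b]" using ab e0 unfolding is_path_def adj_def
    by (auto simp: less_Suc_eq)
  have "\<forall>y. is_path G y \<longrightarrow> length y < Suc (card (verts G))"
    unfolding is_path_def
    using sg_finite_verts[OF sg] by (metis card_mono distinct_card less_Suc_eq_le)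
  then obtain xs where xs: "is_path G xs" "\<forall>y. is_path G y \<longrightarrow> length y \<le> length xs"
    using ex_has_greatest_nat[of "is_path G" "[a,b]" length] p0 by blast
  have len: "length xs \<ge> 2" "distinct xs" "set xs \<subseteq> verts G"
    and adjx: "\<And>i. i + 1 < length xs \<Longrightarrow> adj G (xs ! i) (xs ! (i + 1))"
    using xs(1) unfolding is_path_def by auto
  define l where "l = xs ! 0"
  define e where "e = {xs ! 0, xs ! 1}"
  have eE: "e \<in> edges G" using adjx[of 0] len unfolding e_def adj_def by simp
  have le: "l \<in> e" unfolding l_def e_def by simp
  have "\<forall>e'\<in>edges G. l \<in> e' \<longrightarrow> e' = e"
  proof (intro ballI impI)
    fix e' assume e': "e' \<in> edges G" "l \<in> e'"
    obtain u v where uv: "e' = {u,v}" "u \<noteq> v" "u \<in> verts G" "v \<in> verts G"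
      using sg_edgeE[OF sg e'(1)] by blast
    obtain w where w: "e' = {l, w}" "w \<noteq> l" "w \<in> verts G"
      using uv e'(2) by (metis insert_commute insertE singletonD)
    show "e' = e"
    proof (rule ccontr)
      assume ne': "e' \<noteq> e"
      have w1: "w \<noteq> xs ! 1" using ne' w unfolding e_def l_def by auto
      show False
      proof (cases "w \<in> set xs")
        case False
        have "is_path G (w # xs)"
          unfolding is_path_def
        proof (intro conjI allI impI)
          show "2 \<le> length (w # xs)" using len by simp
          show "distinct (w # xs)" using len False by simp
          show "set (w # xs) \<subseteq> verts G" using len w by simp
          fix i assume i: "i + 1 < length (w # xs)"
          show "adj G ((w # xs) ! i) ((w # xs) ! (i + 1))"
          proof (cases i)
            case 0 then show ?thesis using w e' unfolding adj_def l_def by (simp add: insert_commute)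
          next
            case (Suc j) then show ?thesis using adjx[of j] i by simp
          qed
        qed
        then show False using xs(2) by force
      next
        case True
        then obtain k where k: "k < length xs" "xs ! k = w" by (metis in_set_conv_nth)
        have "k \<noteq> 0"
        proof
          assume "k = 0" then show False using k w unfolding l_def by simp
        qed
        moreover have "k \<noteq> 1" using k w1 by auto
        ultimately have k2: "k \<ge> 2" by simp
        have "is_cycle G (take (k+1) xs)"
          unfolding is_cycle_def
        proof (intro conjI allI impI)
          show "3 \<le> length (take (k + 1) xs)" using k k2 by simp
          show "distinct (take (k + 1) xs)" using len by simp
          show "set (take (k + 1) xs) \<subseteq> verts G" using len set_take_subset by fastforce
          fix i assume "i + 1 < length (take (k + 1) xs)"
          then show "adj G (take (k + 1) xs ! i) (take (k + 1) xs ! (i + 1))"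
            using adjx[of i] k by simp
        next
          have "last (take (k + 1) xs) = w" using k by (simp add: take_Suc_conv_app_nth)
          moreover have "hd (take (k + 1) xs) = l" using k unfolding l_def by (cases xs) auto
          ultimately show "adj G (last (take (k + 1) xs)) (hd (take (k + 1) xs))"
            using w e' unfolding adj_def by (simp add: insert_commute)
        qed
        then show False using ac unfolding acyclic_graph_def by blast
      qed
    qed
  qed
  then show ?thesis using eE le by blast
qed

lemma tree_card_edges:
  "is_tree G \<Longrightarrow> card (edges G) + 1 = card (verts G)"
proof (induction "card (verts G)" arbitrary: G rule: less_induct)
  case less
  have sg: "simple_graph G" and cg: "connected_graph G" and ac: "acyclic_graph G"
    using less.prems unfolding is_tree_def by auto
  have fV: "finite (verts G)" and fE: "finite (edges G)"
    using sg_finite_verts[OF sg] sg_finite_edges[OF sg] by auto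
  show ?case
  proof (cases "edges G = {}")
    case True
    obtain u where u: "u \<in> verts G" using cg unfolding connected_graph_def by blast
    have "verts G = {u}"
    proof (rule ccontr)
      assume "verts G \<noteq> {u}" then obtain v where v: "v \<in> verts G" "v \<noteq> u" using u by blast
      then obtain w where "{v,w} \<in> edges G" using connected_edge[OF cg v(1) u] by blast
      with True show False by simp
    qed
    then show ?thesis using True by simp
  next
    case False
    obtain l e where le: "e \<in> edges G" "l \<in> e" "\<forall>e'\<in>edges G. l \<in> e' \<longrightarrow> e' = e"
      using leaf_exists[OF sg ac False] by blast
    obtain u v where uv: "e = {u,v}" "u \<noteq> v" "u \<in> verts G" "v \<in> verts G"
      using sg_edgeE[OF sg le(1)] by blast
    obtain p where p: "e = {l,p}" "p \<noteq> l" "p \<in> verts G" "l \<in> verts G"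
    proof (cases "l = u")
      case True then show ?thesis using that[of v] uv by blast
    next
      case False then have "l = v" using uv le(2) by blast
      then show ?thesis using that[of u] uv by (metis insert_commute)
    qed
    define G' where "G' = (verts G - {l}, edges G - {e})"
    have vG': "verts G' = verts G - {l}" and eG': "edges G' = edges G - {e}"
      unfolding G'_def verts_def edges_def by simp_all
    have sg': "simple_graph G'"
      unfolding simple_graph_def
    proof (intro conjI ballI)
      show "finite (verts G')" using fV vG' by simp
      fix e' assume e': "e' \<in> edges G'"
      then have e'E: "e' \<in> edges G" "e' \<noteq> e" using eG' by auto
      then have nl: "l \<notin> e'" using le(3) by blast
      obtain x y where xy: "e' = {x,y}" "x \<noteq> y" "x \<in> verts G" "y \<in> verts G"
        using sg_edgeE[OF sg e'E(1)] by blast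
      have "x \<in> verts G'" "y \<in> verts G'" using xy nl vG' by auto
      then show "\<exists>u v. e' = {u, v} \<and> u \<noteq> v \<and> u \<in> verts G' \<and> v \<in> verts G'"
        using xy by blast
    qed
    have ac': "acyclic_graph G'"
      using ac unfolding acyclic_graph_def is_cycle_def adj_def vG' eG' by blast
    define f where "f = (\<lambda>w. if w = l then p else w)"
    have stepf: "f x = f y \<or> adj G' (f x) (f y)" if "adj G x y" for x y
    proof (cases "{x,y} = e")
      case True
      then have "(x = l \<and> y = p) \<or> (x = p \<and> y = l)" using p(1) by (auto simp: doubleton_eq_iff)
      then show ?thesis unfolding f_def using p(2) by auto
    next
      case False
      have xyE: "{x,y} \<in> edges G" using that unfolding adj_def .
      then have "l \<notin> {x,y}" using le(3) False by blast
      then have "f x = x" "f y = y" unfolding f_def by auto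
      then show ?thesis using xyE False unfolding adj_def eG' by simp
    qed
    have reach: "(adj G')\<^sup>*\<^sup>* (f x) (f y)" if "(adj G)\<^sup>*\<^sup>* x y" for x y
      using that
    proof (induction rule: rtranclp_induct)
      case base then show ?case by simp
    next
      case (step y z)
      then show ?case using stepf[OF step(2)] by (metis rtranclp.rtrancl_into_rtrancl)
    qed
    have cg': "connected_graph G'"
      unfolding connected_graph_def
    proof (intro conjI ballI)
      show "verts G' \<noteq> {}" using p vG' by auto
      fix x y assume xy: "x \<in> verts G'" "y \<in> verts G'"
      then have "(adj G)\<^sup>*\<^sup>* x y" using cg vG' unfolding connected_graph_def by auto
      moreover have "f x = x" "f y = y" using xy vG' unfolding f_def by auto
      ultimately show "(adj G')\<^sup>*\<^sup>* x y" using reach by metis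
    qed
    have tree': "is_tree G'" using sg' ac' cg' unfolding is_tree_def by blast
    have cv: "card (verts G') = card (verts G) - 1" using vG' p fV by simp
    have "card (verts G) > 0" using p(3) fV card_gt_0_iff by blast
    then have lt: "card (verts G') < card (verts G)" using cv by linarith
    have IH: "card (edges G') + 1 = card (verts G')" using less.hyps[OF lt tree'] .
    have "card (edges G') = card (edges G) - 1" using eG' le(1) fE by simp
    moreover have "card (edges G) > 0" using le(1) fE card_gt_0_iff by blast
    ultimately show ?thesis using IH cv by linarith
  qed
qed

definition lo :: "'a graph \<Rightarrow> 'a set \<Rightarrow> nat" where "lo G e = Min (deg G ` e)"
definition hi :: "'a graph \<Rightarrow> 'a set \<Rightarrow> nat" where "hi G e = Max (deg G ` e)"

lemma lohi_pair: "lo G {u,v} = min (deg G u) (deg G v)" "hi G {u,v} = max (deg G u) (deg G v)"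
  unfolding lo_def hi_def by auto

lemma ex_edge_iff:
  assumes "e = {a,b}" "a \<noteq> b"
  shows "(\<exists>u v. e = {u,v} \<and> u \<noteq> v \<and> deg G u = i \<and> deg G v = j) \<longleftrightarrow>
         (deg G a = i \<and> deg G b = j) \<or> (deg G b = i \<and> deg G a = j)"
  using assms by (auto simp: doubleton_eq_iff)

lemma m_deg_lohi:
  assumes sg: "simple_graph G" and ij: "i \<le> j"
  shows "m_deg G i j = card {e \<in> edges G. (lo G e, hi G e) = (i, j)}"
proof -
  have "{e \<in> edges G. \<exists>u v. e = {u, v} \<and> u \<noteq> v \<and> deg G u = i \<and> deg G v = j}
        = {e \<in> edges G. (lo G e, hi G e) = (i, j)}"
  proof (rule Collect_cong, rule conj_cong[OF refl])
    fix e assume e: "e \<in> edges G"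
    obtain a b where ab: "e = {a,b}" "a \<noteq> b" using sg_edgeE[OF sg e] by blast
    show "(\<exists>u v. e = {u, v} \<and> u \<noteq> v \<and> deg G u = i \<and> deg G v = j) = ((lo G e, hi G e) = (i, j))"
      unfolding ex_edge_iff[OF ab] using ab(1) ij by (auto simp: lohi_pair min_def max_def)
  qed
  then show ?thesis unfolding m_deg_def by simp
qed

lemma m_deg_pos:
  assumes sg: "simple_graph G" and e: "{u,v} \<in> edges G" and uv: "u \<noteq> v"
  shows "m_deg G (deg G u) (deg G v) > 0"
proof -
  have fin: "finite {e \<in> edges G. \<exists>x y. e = {x, y} \<and> x \<noteq> y \<and> deg G x = deg G u \<and> deg G y = deg G v}"
    using sg_finite_edges[OF sg] by simp
  have "{u,v} \<in> {e \<in> edges G. \<exists>x y. e = {x, y} \<and> x \<noteq> y \<and> deg G x = deg G u \<and> deg G y = deg G v}"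
    using e uv by blast
  then show ?thesis unfolding m_deg_def using fin card_gt_0_iff by blast
qed

lemma group_sum:
  fixes \<phi> :: "nat \<times> nat \<Rightarrow> 'b::comm_semiring_1" and t :: "'c \<Rightarrow> nat \<times> nat"
  assumes fE: "finite E" and fP: "finite P" and tP: "t ` E \<subseteq> P"
  shows "(\<Sum>e\<in>E. \<phi> (t e)) = (\<Sum>p\<in>P. of_nat (card {e \<in> E. t e = p}) * \<phi> p)"
proof -
  have "(\<Sum>e\<in>E. \<phi> (t e)) = (\<Sum>p\<in>P. \<Sum>e\<in>{x. x \<in> E \<and> t x = p}. \<phi> (t e))"
    using sum.group[OF fE fP tP, of "\<lambda>e. \<phi> (t e)"] by simp
  also have "\<dots> = (\<Sum>p\<in>P. of_nat (card {e \<in> E. t e = p}) * \<phi> p)"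
  proof (rule sum.cong[OF refl])
    fix p assume "p \<in> P"
    have "(\<Sum>e\<in>{x. x \<in> E \<and> t x = p}. \<phi> (t e)) = (\<Sum>e\<in>{x. x \<in> E \<and> t x = p}. \<phi> p)"
      by (rule sum.cong) auto
    also have "\<dots> = of_nat (card {e \<in> E. t e = p}) * \<phi> p" by simp
    finally show "(\<Sum>e\<in>{x. x \<in> E \<and> t x = p}. \<phi> (t e)) = of_nat (card {e \<in> E. t e = p}) * \<phi> p" .
  qed
  finally show ?thesis .
qed

definition Ptypes :: "(nat \<times> nat) set" where
  "Ptypes = {(1,1),(1,2),(1,3),(1,4),(2,2),(2,3),(2,4),(3,3),(3,4),(4,4)}"

lemma edge_sum_expand:
  fixes \<phi> :: "nat \<times> nat \<Rightarrow> 'b::comm_semiring_1"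
  assumes sg: "simple_graph G" and degs: "\<And>v. v \<in> verts G \<Longrightarrow> 1 \<le> deg G v \<and> deg G v \<le> 4"
  shows "(\<Sum>e\<in>edges G. \<phi> (lo G e, hi G e)) =
     of_nat (m_deg G 1 1) * \<phi> (1,1) + of_nat (m_deg G 1 2) * \<phi> (1,2) + of_nat (m_deg G 1 3) * \<phi> (1,3) +
     of_nat (m_deg G 1 4) * \<phi> (1,4) + of_nat (m_deg G 2 2) * \<phi> (2,2) + of_nat (m_deg G 2 3) * \<phi> (2,3) +
     of_nat (m_deg G 2 4) * \<phi> (2,4) + of_nat (m_deg G 3 3) * \<phi> (3,3) + of_nat (m_deg G 3 4) * \<phi> (3,4) +
     of_nat (m_deg G 4 4) * \<phi> (4,4)"
proof -
  have tP: "(\<lambda>e. (lo G e, hi G e)) ` edges G \<subseteq> Ptypes"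
  proof
    fix p assume "p \<in> (\<lambda>e. (lo G e, hi G e)) ` edges G"
    then obtain e where e: "e \<in> edges G" "p = (lo G e, hi G e)" by blast
    obtain a b where ab: "e = {a,b}" "a \<noteq> b" "a \<in> verts G" "b \<in> verts G" using sg_edgeE[OF sg e(1)] by blast
    have "1 \<le> deg G a" "deg G a \<le> 4" "1 \<le> deg G b" "deg G b \<le> 4" using degs ab by auto
    then have "(min (deg G a) (deg G b), max (deg G a) (deg G b)) \<in> Ptypes"
      unfolding Ptypes_def
      by (cases "deg G a"; cases "deg G b"; simp add: min_def max_def; presburger)
    then show "p \<in> Ptypes" using e ab by (simp add: lohi_pair)
  qed
  have "(\<Sum>e\<in>edges G. \<phi> (lo G e, hi G e)) =
        (\<Sum>p\<in>Ptypes. of_nat (card {e \<in> edges G. (lo G e, hi G e) = p}) * \<phi> p)"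
    using group_sum[OF sg_finite_edges[OF sg] _ tP, of \<phi>] unfolding Ptypes_def by simp
  also have "\<dots> = (\<Sum>p\<in>Ptypes. of_nat (m_deg G (fst p) (snd p)) * \<phi> p)"
  proof (rule sum.cong[OF refl])
    fix p assume "p \<in> Ptypes"
    then have "fst p \<le> snd p" unfolding Ptypes_def by auto
    then show "of_nat (card {e \<in> edges G. (lo G e, hi G e) = p}) * \<phi> p = of_nat (m_deg G (fst p) (snd p)) * \<phi> p"
      using m_deg_lohi[OF sg, of "fst p" "snd p"] by simp
  qed
  also have "\<dots> = of_nat (m_deg G 1 1) * \<phi> (1,1) + of_nat (m_deg G 1 2) * \<phi> (1,2) + of_nat (m_deg G 1 3) * \<phi> (1,3) +
     of_nat (m_deg G 1 4) * \<phi> (1,4) + of_nat (m_deg G 2 2) * \<phi> (2,2) + of_nat (m_deg G 2 3) * \<phi> (2,3) +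
     of_nat (m_deg G 2 4) * \<phi> (2,4) + of_nat (m_deg G 3 3) * \<phi> (3,3) + of_nat (m_deg G 3 4) * \<phi> (3,4) +
     of_nat (m_deg G 4 4) * \<phi> (4,4)"
    unfolding Ptypes_def by (simp add: algebra_simps)
  finally show ?thesis .
qed

lemma deg_bounds:
  assumes ct: "chemical_tree G" and c2: "card (verts G) \<ge> 2" and v: "v \<in> verts G"
  shows "1 \<le> deg G v \<and> deg G v \<le> 4"
proof
  have sg: "simple_graph G" and cg: "connected_graph G"
    using ct unfolding chemical_tree_def is_tree_def by auto
  have "verts G \<noteq> {v}" using c2 by auto
  then obtain w where w: "w \<in> verts G" "w \<noteq> v" using v by blast
  obtain x where x: "{v,x} \<in> edges G" using connected_edge[OF cg v w(1)] w(2) by metis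
  have "{v,x} \<in> {e \<in> edges G. v \<in> e}" using x by simp
  moreover have "finite {e \<in> edges G. v \<in> e}" using sg_finite_edges[OF sg] by simp
  ultimately show "1 \<le> deg G v" unfolding deg_def
    by (metis One_nat_def Suc_leI card_gt_0_iff empty_iff)
  show "deg G v \<le> 4" using ct v unfolding chemical_tree_def by blast
qed

lemma deg1_unique:
  assumes sg: "simple_graph G" and d: "deg G x = 1" and e: "e \<in> edges G" "x \<in> e"
    and e': "e' \<in> edges G" "x \<in> e'"
  shows "e' = e"
proof -
  have "card {f \<in> edges G. x \<in> f} = 1" using d unfolding deg_def .
  then obtain a where a: "{f \<in> edges G. x \<in> f} = {a}" by (rule card_1_singletonE)
  have "e \<in> {f \<in> edges G. x \<in> f}" "e' \<in> {f \<in> edges G. x \<in> f}" using e e' by simp_all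
  then show ?thesis unfolding a by simp
qed

lemma m11_zero:
  assumes ct: "chemical_tree G" and c3: "card (verts G) \<ge> 3"
  shows "m_deg G 1 1 = 0"
proof (rule ccontr)
  have sg: "simple_graph G" and cg: "connected_graph G"
    using ct unfolding chemical_tree_def is_tree_def by auto
  assume "m_deg G 1 1 \<noteq> 0"
  then have "{e \<in> edges G. \<exists>u v. e = {u, v} \<and> u \<noteq> v \<and> deg G u = 1 \<and> deg G v = 1} \<noteq> {}"
    unfolding m_deg_def by (metis card.empty)
  then obtain u v where uv: "{u,v} \<in> edges G" "u \<noteq> v" "deg G u = 1" "deg G v = 1"
    by blast
  have cl: "w \<in> {u,v}" if "(adj G)\<^sup>*\<^sup>* u w" for w
    using that
  proof (induction rule: rtranclp_induct)
    case base then show ?case by simp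
  next
    case (step y z)
    have yz: "{y,z} \<in> edges G" using step(2) unfolding adj_def .
    have dy: "deg G y = 1" using step(3) uv(3,4) by blast
    have "{y,z} = {u,v}" using deg1_unique[OF sg dy uv(1) step(3) yz] by simp
    then show ?case by auto
  qed
  have uV: "u \<in> verts G" using sg_edges_sub[OF sg uv(1)] by simp
  have "verts G \<subseteq> {u,v}"
  proof
    fix x assume "x \<in> verts G"
    then have "(adj G)\<^sup>*\<^sup>* u x" using cg uV unfolding connected_graph_def by blast
    then show "x \<in> {u,v}" by (rule cl)
  qed
  then have "card (verts G) \<le> card {u,v}" by (intro card_mono) auto
  also have "card {u,v} = 2" using uv(2) by simp
  finally have "card (verts G) \<le> 2" .
  then show False using c3 by simp
qed

lemma deg2_closed:
  assumes ct: "chemical_tree G" and c2: "card (verts G) \<ge> 2"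
    and z: "m_deg G 1 2 = 0" "m_deg G 2 3 = 0" "m_deg G 2 4 = 0"
    and x: "x \<in> verts G" "deg G x = 2" and y: "y \<in> verts G"
  shows "deg G y = 2"
proof -
  have sg: "simple_graph G" and cg: "connected_graph G"
    using ct unfolding chemical_tree_def is_tree_def by auto
  have st: "deg G b = 2" if ab: "{a,b} \<in> edges G" "deg G a = 2" for a b
  proof -
    obtain p q where pq: "{a,b} = {p,q}" "p \<noteq> q" "p \<in> verts G" "q \<in> verts G"
      using sg_edgeE[OF sg ab(1)] by blast
    then have abne: "a \<noteq> b" "b \<in> verts G" by (auto simp: doubleton_eq_iff)
    have ba: "{b,a} \<in> edges G" using ab(1) by (simp add: insert_commute)
    have b14: "1 \<le> deg G b \<and> deg G b \<le> 4" using deg_bounds[OF ct c2 abne(2)] .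
    show ?thesis
    proof (rule ccontr)
      assume "deg G b \<noteq> 2"
      then have "deg G b = 1 \<or> deg G b = 3 \<or> deg G b = 4" using b14 by auto
      then show False
        using m_deg_pos[OF sg ab(1) abne(1)] m_deg_pos[OF sg ba abne(1)[symmetric]] ab(2) z by auto
    qed
  qed
  have "deg G w = 2" if "(adj G)\<^sup>*\<^sup>* x w" for w
    using that
  proof (induction rule: rtranclp_induct)
    case base then show ?case using x by simp
  next
    case (step a b) then show ?case using st unfolding adj_def by blast
  qed
  then show ?thesis using cg x y unfolding connected_graph_def by blast
qed

lemma mii_le:
  assumes sg: "simple_graph G"
  shows "m_deg G i i \<le> n_deg G i choose 2"
proof -
  let ?Vi = "{v \<in> verts G. deg G v = i}"
  have fVi: "finite ?Vi" using sg_finite_verts[OF sg] by simp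
  have sub: "{e \<in> edges G. \<exists>u v. e = {u, v} \<and> u \<noteq> v \<and> deg G u = i \<and> deg G v = i}
        \<subseteq> {B. B \<subseteq> ?Vi \<and> card B = 2}"
  proof
    fix e assume "e \<in> {e \<in> edges G. \<exists>u v. e = {u, v} \<and> u \<noteq> v \<and> deg G u = i \<and> deg G v = i}"
    then obtain u v where uv: "e \<in> edges G" "e = {u,v}" "u \<noteq> v" "deg G u = i" "deg G v = i" by blast
    have "e \<subseteq> verts G" using sg_edges_sub[OF sg uv(1)] .
    then have "e \<subseteq> ?Vi" using uv(2,4,5) by blast
    moreover have "card e = 2" using uv(2,3) by simp
    ultimately show "e \<in> {B. B \<subseteq> ?Vi \<and> card B = 2}" by blast
  qed
  have "finite {B. B \<subseteq> ?Vi \<and> card B = 2}" using fVi by simp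
  then have "m_deg G i i \<le> card {B. B \<subseteq> ?Vi \<and> card B = 2}"
    unfolding m_deg_def using card_mono sub by blast
  also have "\<dots> = n_deg G i choose 2" unfolding n_deg_def using n_subsets[OF fVi] by simp
  finally show ?thesis .
qed

lemma m33_le2:
  assumes ct: "chemical_tree G" and n3: "n_deg G 3 = 3"
  shows "m_deg G 3 3 \<le> 2"
proof (rule ccontr)
  have sg: "simple_graph G" and ac: "acyclic_graph G"
    using ct unfolding chemical_tree_def is_tree_def by auto
  assume "\<not> m_deg G 3 3 \<le> 2"
  moreover have "m_deg G 3 3 \<le> 3" using mii_le[OF sg, of 3] n3 by (simp add: numeral_eq_Suc)
  ultimately have m3: "m_deg G 3 3 = 3" by simp
  let ?V3 = "{v \<in> verts G. deg G v = 3}"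
  let ?E3 = "{e \<in> edges G. \<exists>u v. e = {u, v} \<and> u \<noteq> v \<and> deg G u = 3 \<and> deg G v = 3}"
  let ?S = "{B. B \<subseteq> ?V3 \<and> card B = 2}"
  have fV3: "finite ?V3" using sg_finite_verts[OF sg] by simp
  have sub: "?E3 \<subseteq> ?S"
  proof
    fix e assume "e \<in> ?E3"
    then obtain u v where uv: "e \<in> edges G" "e = {u,v}" "u \<noteq> v" "deg G u = 3" "deg G v = 3" by blast
    have "e \<subseteq> verts G" using sg_edges_sub[OF sg uv(1)] .
    then have "e \<subseteq> ?V3" using uv(2,4,5) by blast
    moreover have "card e = 2" using uv(2,3) by simp
    ultimately show "e \<in> ?S" by blast
  qed
  have cS: "card ?S = 3" using n_subsets[OF fV3, of 2] n3 unfolding n_deg_def by (simp add: numeral_eq_Suc)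
  have fS: "finite ?S" using fV3 by simp
  have "card ?E3 = 3" using m3 unfolding m_deg_def .
  then have eq: "?E3 = ?S" using card_subset_eq[OF fS sub] cS by simp
  obtain a b c where abc: "?V3 = {a,b,c}" "a \<noteq> b" "b \<noteq> c" "a \<noteq> c"
    using n3 unfolding n_deg_def card_3_iff by blast
  have "{a,b} \<in> ?S" "{b,c} \<in> ?S" "{c,a} \<in> ?S" using abc by auto
  then have E: "{a,b} \<in> edges G" "{b,c} \<in> edges G" "{c,a} \<in> edges G" using eq by blast+
  have V: "a \<in> verts G" "b \<in> verts G" "c \<in> verts G" using abc(1) by blast+
  have "is_cycle G [a,b,c]"
    unfolding is_cycle_def
  proof (intro conjI allI impI)
    fix i assume "i + 1 < length [a,b,c]"
    then have "i = 0 \<or> i = 1" by auto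
    then show "adj G ([a, b, c] ! i) ([a, b, c] ! (i + 1))" using E unfolding adj_def by auto
  qed (use abc V E in \<open>auto simp: adj_def\<close>)
  then show False using ac unfolding acyclic_graph_def by blast
qed

lemma m44_zero:
  assumes sg: "simple_graph G" and n4: "n_deg G 4 \<le> 1"
  shows "m_deg G 4 4 = 0"
proof -
  have "m_deg G 4 4 \<le> n_deg G 4 choose 2" using mii_le[OF sg] .
  also have "\<dots> = 0" using n4 by (intro binomial_eq_0) simp
  finally show ?thesis by (metis le_zero_eq)
qed

lemma m33_small:
  assumes sg: "simple_graph G"
  shows "n_deg G 3 \<le> 1 \<Longrightarrow> m_deg G 3 3 = 0" "n_deg G 3 = 2 \<Longrightarrow> m_deg G 3 3 \<le> 1"
proof -
  show "n_deg G 3 \<le> 1 \<Longrightarrow> m_deg G 3 3 = 0"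
  proof -
    assume "n_deg G 3 \<le> 1"
    then have "n_deg G 3 choose 2 = 0" by (intro binomial_eq_0) simp
    then show "m_deg G 3 3 = 0" using mii_le[OF sg, of 3] by (metis le_zero_eq)
  qed
  show "n_deg G 3 = 2 \<Longrightarrow> m_deg G 3 3 \<le> 1"
    using mii_le[OF sg, of 3] by simp
qed

lemma edge_pair_sum:
  fixes f :: "nat \<Rightarrow> 'b::comm_semiring_1"
  assumes sg: "simple_graph G" and e: "e \<in> edges G"
  shows "(\<Sum>x\<in>e. f (deg G x)) = f (lo G e) + f (hi G e)"
proof -
  obtain a b where ab: "e = {a,b}" "a \<noteq> b" using sg_edgeE[OF sg e] by blast
  show ?thesis using ab
    by (cases "deg G a \<le> deg G b") (simp_all add: lohi_pair min_def max_def add.commute)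
qed

lemma card_deg_sum:
  assumes sg: "simple_graph G" and degs: "\<And>v. v \<in> verts G \<Longrightarrow> 1 \<le> deg G v \<and> deg G v \<le> 4"
  shows "n_deg G 1 + n_deg G 2 + n_deg G 3 + n_deg G 4 = card (verts G)"
proof -
  have fV: "finite (verts G)" using sg_finite_verts[OF sg] .
  have sub: "deg G ` verts G \<subseteq> {1,2,3,4}" using degs by force
  have "(\<Sum>y\<in>{1,2,3,4}. \<Sum>x\<in>{x. x \<in> verts G \<and> deg G x = y}. (1::nat)) = (\<Sum>x\<in>verts G. 1)"
    by (rule sum.group[OF fV _ sub]) simp
  then show ?thesis unfolding n_deg_def by simp
qed

lemma deg_ident:
  assumes sg: "simple_graph G" and degs: "\<And>v. v \<in> verts G \<Longrightarrow> 1 \<le> deg G v \<and> deg G v \<le> 4"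
  shows "i * n_deg G i = (\<Sum>e\<in>edges G. (\<lambda>p. (if fst p = i then 1 else 0) + (if snd p = i then 1 else (0::nat))) (lo G e, hi G e))"
proof -
  have fV: "finite (verts G)" using sg_finite_verts[OF sg] .
  have "(\<Sum>v\<in>verts G. of_nat (deg G v) * (\<lambda>x. if deg G x = i then 1 else (0::nat)) v)
        = (\<Sum>e\<in>edges G. \<Sum>x\<in>e. (\<lambda>x. if deg G x = i then 1 else (0::nat)) x)"
    by (rule double_count[OF sg])
  moreover have "(\<Sum>v\<in>verts G. of_nat (deg G v) * (\<lambda>x. if deg G x = i then 1 else (0::nat)) v)
        = i * n_deg G i"
  proof -
    have "(\<Sum>v\<in>verts G. of_nat (deg G v) * (\<lambda>x. if deg G x = i then 1 else (0::nat)) v)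
          = (\<Sum>v\<in>verts G. if deg G v = i then i else 0)" by (rule sum.cong) auto
    also have "\<dots> = (\<Sum>v\<in>{v \<in> verts G. deg G v = i}. i)"
      using sum.inter_filter[OF fV, of "\<lambda>_. i" "\<lambda>v. deg G v = i"] by simp
    also have "\<dots> = i * n_deg G i" unfolding n_deg_def by simp
    finally show ?thesis .
  qed
  moreover have "(\<Sum>e\<in>edges G. \<Sum>x\<in>e. (\<lambda>x. if deg G x = i then 1 else (0::nat)) x)
      = (\<Sum>e\<in>edges G. (\<lambda>p. (if fst p = i then 1 else 0) + (if snd p = i then 1 else (0::nat))) (lo G e, hi G e))"
  proof (rule sum.cong[OF refl])
    fix e assume e: "e \<in> edges G"
    show "(\<Sum>x\<in>e. (\<lambda>x. if deg G x = i then 1 else (0::nat)) x) =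
      (\<lambda>p. (if fst p = i then 1 else 0) + (if snd p = i then 1 else (0::nat))) (lo G e, hi G e)"
      using edge_pair_sum[OF sg e, of "\<lambda>d. if d = i then 1 else (0::nat)"] by simp
  qed
  ultimately show ?thesis by simp
qed

lemma master:
  assumes G: "G \<in> CT n" and n: "n \<ge> 13"
  shows "sombor G = real (m_deg G 1 1) * sqrt 2 + real (m_deg G 1 2) * sqrt 5 + real (m_deg G 1 3) * sqrt 10 +
     real (m_deg G 1 4) * sqrt 17 + real (m_deg G 2 2) * sqrt 8 + real (m_deg G 2 3) * sqrt 13 +
     real (m_deg G 2 4) * sqrt 20 + real (m_deg G 3 3) * sqrt 18 + real (m_deg G 3 4) * sqrt 25 +
     real (m_deg G 4 4) * sqrt 32"
  and "m_deg G 1 1 + m_deg G 1 2 + m_deg G 1 3 + m_deg G 1 4 + m_deg G 2 2 + m_deg G 2 3 +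
     m_deg G 2 4 + m_deg G 3 3 + m_deg G 3 4 + m_deg G 4 4 + 1 = n"
  and "n_deg G 1 + n_deg G 2 + n_deg G 3 + n_deg G 4 = n"
  and "n_deg G 1 = 2 * m_deg G 1 1 + m_deg G 1 2 + m_deg G 1 3 + m_deg G 1 4"
  and "2 * n_deg G 2 = m_deg G 1 2 + 2 * m_deg G 2 2 + m_deg G 2 3 + m_deg G 2 4"
  and "3 * n_deg G 3 = m_deg G 1 3 + m_deg G 2 3 + 2 * m_deg G 3 3 + m_deg G 3 4"
  and "4 * n_deg G 4 = m_deg G 1 4 + m_deg G 2 4 + m_deg G 3 4 + 2 * m_deg G 4 4"
  and "m_deg G 1 1 = 0"
  and "n_deg G 3 \<le> 1 \<Longrightarrow> m_deg G 3 3 = 0"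
  and "n_deg G 3 = 2 \<Longrightarrow> m_deg G 3 3 \<le> 1"
  and "n_deg G 3 = 3 \<Longrightarrow> m_deg G 3 3 \<le> 2"
  and "n_deg G 4 \<le> 1 \<Longrightarrow> m_deg G 4 4 = 0"
  and "m_deg G 1 2 = 0 \<Longrightarrow> m_deg G 2 3 = 0 \<Longrightarrow> m_deg G 2 4 = 0 \<Longrightarrow>
        n_deg G 2 = 0 \<or> n_deg G 1 + n_deg G 3 + n_deg G 4 = 0"
  and "max_deg G \<le> 3 \<longleftrightarrow> n_deg G 4 = 0"
proof -
  have ct: "chemical_tree G" and cV: "card (verts G) = n" using G unfolding CT_def by auto
  have tr: "is_tree G" using ct unfolding chemical_tree_def by blast
  have sg: "simple_graph G" using tr unfolding is_tree_def by blast
  have fV: "finite (verts G)" using sg_finite_verts[OF sg] .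
  have c2: "card (verts G) \<ge> 2" using cV n by simp
  have degs: "\<And>v. v \<in> verts G \<Longrightarrow> 1 \<le> deg G v \<and> deg G v \<le> 4"
    using deg_bounds[OF ct c2] by blast
  note EX = edge_sum_expand[OF sg degs]
  have "sombor G = (\<Sum>e\<in>edges G. (\<lambda>p. sqrt ((real (fst p))\<^sup>2 + (real (snd p))\<^sup>2)) (lo G e, hi G e))"
    unfolding sombor_def
  proof (rule sum.cong[OF refl])
    fix e assume e: "e \<in> edges G"
    show "sqrt (\<Sum>x\<in>e. (real (deg G x))\<^sup>2) = (\<lambda>p. sqrt ((real (fst p))\<^sup>2 + (real (snd p))\<^sup>2)) (lo G e, hi G e)"
      using edge_pair_sum[OF sg e, of "\<lambda>d. (real d)\<^sup>2"] by simp
  qed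
  also have "\<dots> = real (m_deg G 1 1) * sqrt 2 + real (m_deg G 1 2) * sqrt 5 + real (m_deg G 1 3) * sqrt 10 +
     real (m_deg G 1 4) * sqrt 17 + real (m_deg G 2 2) * sqrt 8 + real (m_deg G 2 3) * sqrt 13 +
     real (m_deg G 2 4) * sqrt 20 + real (m_deg G 3 3) * sqrt 18 + real (m_deg G 3 4) * sqrt 25 +
     real (m_deg G 4 4) * sqrt 32"
    using EX[of "\<lambda>p. sqrt ((real (fst p))\<^sup>2 + (real (snd p))\<^sup>2)"] by (simp add: power2_eq_square)
  finally show "sombor G = real (m_deg G 1 1) * sqrt 2 + real (m_deg G 1 2) * sqrt 5 + real (m_deg G 1 3) * sqrt 10 +
     real (m_deg G 1 4) * sqrt 17 + real (m_deg G 2 2) * sqrt 8 + real (m_deg G 2 3) * sqrt 13 +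
     real (m_deg G 2 4) * sqrt 20 + real (m_deg G 3 3) * sqrt 18 + real (m_deg G 3 4) * sqrt 25 +
     real (m_deg G 4 4) * sqrt 32" .
  have "card (edges G) = (\<Sum>e\<in>edges G. (\<lambda>p. (1::nat)) (lo G e, hi G e))" by simp
  also have "\<dots> = m_deg G 1 1 + m_deg G 1 2 + m_deg G 1 3 + m_deg G 1 4 + m_deg G 2 2 + m_deg G 2 3 +
     m_deg G 2 4 + m_deg G 3 3 + m_deg G 3 4 + m_deg G 4 4" using EX[of "\<lambda>p. (1::nat)"] by simp
  finally show "m_deg G 1 1 + m_deg G 1 2 + m_deg G 1 3 + m_deg G 1 4 + m_deg G 2 2 + m_deg G 2 3 +
     m_deg G 2 4 + m_deg G 3 3 + m_deg G 3 4 + m_deg G 4 4 + 1 = n"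
    using tree_card_edges[OF tr] cV by simp
  show "n_deg G 1 + n_deg G 2 + n_deg G 3 + n_deg G 4 = n" using card_deg_sum[OF sg degs] cV by simp
  show "n_deg G 1 = 2 * m_deg G 1 1 + m_deg G 1 2 + m_deg G 1 3 + m_deg G 1 4"
    using deg_ident[OF sg degs, of 1] EX[of "\<lambda>p. (if fst p = 1 then 1 else 0) + (if snd p = 1 then 1 else (0::nat))"] by simp
  show "2 * n_deg G 2 = m_deg G 1 2 + 2 * m_deg G 2 2 + m_deg G 2 3 + m_deg G 2 4"
    using deg_ident[OF sg degs, of 2] EX[of "\<lambda>p. (if fst p = 2 then 1 else 0) + (if snd p = 2 then 1 else (0::nat))"] by simp
  show "3 * n_deg G 3 = m_deg G 1 3 + m_deg G 2 3 + 2 * m_deg G 3 3 + m_deg G 3 4"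
    using deg_ident[OF sg degs, of 3] EX[of "\<lambda>p. (if fst p = 3 then 1 else 0) + (if snd p = 3 then 1 else (0::nat))"] by simp
  show "4 * n_deg G 4 = m_deg G 1 4 + m_deg G 2 4 + m_deg G 3 4 + 2 * m_deg G 4 4"
    using deg_ident[OF sg degs, of 4] EX[of "\<lambda>p. (if fst p = 4 then 1 else 0) + (if snd p = 4 then 1 else (0::nat))"] by simp
  show "m_deg G 1 1 = 0" using m11_zero[OF ct] cV n by simp
  show "n_deg G 3 \<le> 1 \<Longrightarrow> m_deg G 3 3 = 0" "n_deg G 3 = 2 \<Longrightarrow> m_deg G 3 3 \<le> 1"
    using m33_small[OF sg] by auto
  show "n_deg G 3 = 3 \<Longrightarrow> m_deg G 3 3 \<le> 2" using m33_le2[OF ct] by blast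
  show "n_deg G 4 \<le> 1 \<Longrightarrow> m_deg G 4 4 = 0" using m44_zero[OF sg] by blast
  show "m_deg G 1 2 = 0 \<Longrightarrow> m_deg G 2 3 = 0 \<Longrightarrow> m_deg G 2 4 = 0 \<Longrightarrow>
        n_deg G 2 = 0 \<or> n_deg G 1 + n_deg G 3 + n_deg G 4 = 0"
  proof (rule ccontr)
    assume z: "m_deg G 1 2 = 0" "m_deg G 2 3 = 0" "m_deg G 2 4 = 0"
      and ne: "\<not> (n_deg G 2 = 0 \<or> n_deg G 1 + n_deg G 3 + n_deg G 4 = 0)"
    have "{v \<in> verts G. deg G v = 2} \<noteq> {}" using ne unfolding n_deg_def by (metis card.empty)
    then obtain x where x: "x \<in> verts G" "deg G x = 2" by blast
    have "n_deg G 1 \<noteq> 0 \<or> n_deg G 3 \<noteq> 0 \<or> n_deg G 4 \<noteq> 0" using ne by simp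
    then obtain y where y: "y \<in> verts G" "deg G y \<noteq> 2"
    proof (elim disjE)
      assume "n_deg G 1 \<noteq> 0"
      then have "{v \<in> verts G. deg G v = 1} \<noteq> {}" unfolding n_deg_def by (metis card.empty)
      then show ?thesis using that by force
    next
      assume "n_deg G 3 \<noteq> 0"
      then have "{v \<in> verts G. deg G v = 3} \<noteq> {}" unfolding n_deg_def by (metis card.empty)
      then show ?thesis using that by force
    next
      assume "n_deg G 4 \<noteq> 0"
      then have "{v \<in> verts G. deg G v = 4} \<noteq> {}" unfolding n_deg_def by (metis card.empty)
      then show ?thesis using that by force
    qed
    show False using deg2_closed[OF ct c2 z x y(1)] y(2) by simp
  qed
  have "max_deg G \<le> 3 \<longleftrightarrow> (\<forall>v\<in>verts G. deg G v \<le> 3)"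
    unfolding max_deg_def using fV c2 by (subst Max_le_iff) auto
  also have "\<dots> \<longleftrightarrow> {v \<in> verts G. deg G v = 4} = {}" using degs by force
  also have "\<dots> \<longleftrightarrow> n_deg G 4 = 0" unfolding n_deg_def using fV by simp
  finally show "max_deg G \<le> 3 \<longleftrightarrow> n_deg G 4 = 0" .
qed

lemma sqrt_bounds:
  "(1414213 / 1000000) < sqrt 2" "sqrt 2 < (1414214 / 1000000)"
  "(2236067 / 1000000) < sqrt 5" "sqrt 5 < (2236068 / 1000000)"
  "(2828427 / 1000000) < sqrt 8" "sqrt 8 < (2828428 / 1000000)"
  "(3162277 / 1000000) < sqrt 10" "sqrt 10 < (3162278 / 1000000)"
  "(3605551 / 1000000) < sqrt 13" "sqrt 13 < (3605552 / 1000000)"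
  "(4123105 / 1000000) < sqrt 17" "sqrt 17 < (4123106 / 1000000)"
  "(4242640 / 1000000) < sqrt 18" "sqrt 18 < (4242641 / 1000000)"
  "(4472135 / 1000000) < sqrt 20" "sqrt 20 < (4472136 / 1000000)"
  "(5656854 / 1000000) < sqrt 32" "sqrt 32 < (5656855 / 1000000)"
  "sqrt 25 = 5"
  by (rule real_less_rsqrt real_less_lsqrt; simp add: power2_eq_square)+ simp

lemma so_form:
  assumes G: "G \<in> CT n" and n: "n \<ge> 13"
  shows "sombor G = (real n - 1) * sqrt 8 +
    (real (m_deg G 1 1) * (sqrt 2 - sqrt 8) + real (m_deg G 1 2) * (sqrt 5 - sqrt 8) +
     real (m_deg G 1 3) * (sqrt 10 - sqrt 8) + real (m_deg G 1 4) * (sqrt 17 - sqrt 8) +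
     real (m_deg G 2 3) * (sqrt 13 - sqrt 8) + real (m_deg G 2 4) * (sqrt 20 - sqrt 8) +
     real (m_deg G 3 3) * (sqrt 18 - sqrt 8) + real (m_deg G 3 4) * (sqrt 25 - sqrt 8) +
     real (m_deg G 4 4) * (sqrt 32 - sqrt 8))"
proof -
  have e: "real n = real (m_deg G 1 1) + real (m_deg G 1 2) + real (m_deg G 1 3) + real (m_deg G 1 4) +
     real (m_deg G 2 2) + real (m_deg G 2 3) + real (m_deg G 2 4) + real (m_deg G 3 3) +
     real (m_deg G 3 4) + real (m_deg G 4 4) + 1"
    using arg_cong[OF master(2)[OF G n, symmetric], of real] by simp
  show ?thesis unfolding master(1)[OF G n] e by (simp add: algebra_simps)
qed

lemma A_form:
  assumes T: "T \<in> A n k" and n: "n \<ge> 13" and mv: "mvec T = (a, b, c, d, e)"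
  shows "sombor T = (real n - 1) * sqrt 8 + real a * (sqrt 18 - sqrt 8) + real b * (sqrt 13 - sqrt 8)
     + real c * (sqrt 5 - sqrt 8) + real d * (sqrt 10 - sqrt 8)"
proof -
  have G: "T \<in> CT n" and md: "max_deg T \<le> 3" using T unfolding A_def by auto
  have n4: "n_deg T 4 = 0" using master(14)[OF G n] md by simp
  have z: "m_deg T 1 4 = 0" "m_deg T 2 4 = 0" "m_deg T 3 4 = 0" "m_deg T 4 4 = 0"
    using master(7)[OF G n] n4 by simp_all
  have m: "m_deg T 3 3 = a" "m_deg T 2 3 = b" "m_deg T 1 2 = c" "m_deg T 1 3 = d"
    using mv unfolding mvec_def by simp_all
  show ?thesis unfolding so_form[OF G n] using z m master(8)[OF G n] by simp
qed

lemma Omega_form: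
  assumes T: "T \<in> Omega n" and n: "n \<ge> 13"
  shows "sombor T = (real n - 1) * sqrt 8 + 2 * (sqrt 18 - sqrt 8) + 5 * (sqrt 13 - sqrt 8)
     + 5 * (sqrt 5 - sqrt 8)"
proof -
  have G: "T \<in> CT n" using T unfolding Omega_def by auto
  have n4: "n_deg T 4 = 0" using master(3)[OF G n] T n unfolding Omega_def by auto
  have z: "m_deg T 1 4 = 0" "m_deg T 2 4 = 0" "m_deg T 3 4 = 0" "m_deg T 4 4 = 0"
    using master(7)[OF G n] n4 by simp_all
  have m: "m_deg T 3 3 = 2" "m_deg T 2 3 = 5" "m_deg T 1 2 = 5" "m_deg T 1 3 = 0"
    using T unfolding Omega_def by simp_all
  show ?thesis unfolding so_form[OF G n] using z m master(8)[OF G n] by simp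
qed

lemma Avec_vals:
  "Avec n 1 = (0,0,2,0,n-3)" "Avec n 2 = (0,1,1,2,n-5)" "Avec n 3 = (0,2,2,1,n-6)"
  "Avec n 4 = (0,3,3,0,n-7)" "Avec n 5 = (0,2,0,4,n-7)" "Avec n 6 = (0,3,1,3,n-8)"
  "Avec n 7 = (0,4,2,2,n-9)" "Avec n 8 = (1,1,1,3,n-7)" "Avec n 9 = (0,5,3,1,n-10)"
  "Avec n 10 = (1,2,2,2,n-8)" "Avec n 11 = (0,6,4,0,n-11)" "Avec n 12 = (1,3,3,1,n-9)"
  "Avec n 13 = (1,4,4,0,n-10)"
  by (simp_all add: Avec_def)

lemma A_mvec: "T \<in> A n k \<Longrightarrow> mvec T = Avec n k" unfolding A_def by simp

lemma classify:
  fixes n N1 N2 N3 m12 m13 m22 m23 m33 :: nat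
  assumes n: "n \<ge> 13"
   and E: "m12 + m13 + m22 + m23 + m33 + 1 = n"
   and V: "N1 + N2 + N3 = n"
   and d1: "N1 = m12 + m13" and d2: "2 * N2 = m12 + 2 * m22 + m23"
   and d3: "3 * N3 = m13 + m23 + 2 * m33"
   and N3: "N3 \<le> 2" and c1: "N3 \<le> 1 \<Longrightarrow> m33 = 0" and c2: "N3 = 2 \<Longrightarrow> m33 \<le> 1"
   and conn: "m12 = 0 \<Longrightarrow> m23 = 0 \<Longrightarrow> N2 = 0 \<or> N1 + N3 = 0"
  shows "\<exists>k\<in>{1..13}. (m33, m23, m12, m13, m22) = Avec n k"
proof -
  have N1: "N1 = N3 + 2" using E V d1 d2 d3 by linarith
  have ex: "\<exists>k\<in>{1..13}. (m33, m23, m12, m13, m22) = Avec n k"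
    if "(m33, m23, m12, m13, m22) = Avec n k" "k \<in> {1..13}" for k using that by blast
  consider "N3 = 0" | "N3 = 1" | "N3 = 2" using N3 by linarith
  then show ?thesis
  proof cases
    case 1
    have "(m33, m23, m12, m13, m22) = Avec n 1" unfolding Avec_vals
      using 1 E V d1 d2 d3 N1 by (simp only: prod.inject) arith
    then show ?thesis using ex by simp
  next
    case 2
    have m33: "m33 = 0" using c1 2 by simp
    consider "m13 = 0" | "m13 = 1" | "m13 = 2" | "m13 = 3" using d3 2 m33 by linarith
    then show ?thesis
    proof cases
      case 1
      have "(m33, m23, m12, m13, m22) = Avec n 4" unfolding Avec_vals
        using 1 \<open>N3 = 1\<close> m33 E V d1 d2 d3 N1 by (simp only: prod.inject) arith
      then show ?thesis using ex by simp
    next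
      case 2
      have "(m33, m23, m12, m13, m22) = Avec n 3" unfolding Avec_vals
        using 2 \<open>N3 = 1\<close> m33 E V d1 d2 d3 N1 by (simp only: prod.inject) arith
      then show ?thesis using ex by simp
    next
      case 3
      have "(m33, m23, m12, m13, m22) = Avec n 2" unfolding Avec_vals
        using 3 \<open>N3 = 1\<close> m33 E V d1 d2 d3 N1 by (simp only: prod.inject) arith
      then show ?thesis using ex by simp
    next
      case 4
      have "m12 = 0" "m23 = 0" using 4 \<open>N3 = 1\<close> m33 d1 d3 N1 by linarith+
      then have "N2 = 0 \<or> N1 + N3 = 0" using conn by blast
      then show ?thesis using 4 \<open>N3 = 1\<close> m33 E V d1 d2 d3 N1 n by linarith
    qed
  next
    case 3
    have "m33 = 0 \<or> m33 = 1" using c2 3 by linarith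
    then show ?thesis
    proof
      assume m33: "m33 = 0"
      consider "m13 = 0" | "m13 = 1" | "m13 = 2" | "m13 = 3" | "m13 = 4" using d1 N1 3 by linarith
      then show ?thesis
      proof cases
        case 1
        have "(m33, m23, m12, m13, m22) = Avec n 11" unfolding Avec_vals
          using 1 \<open>N3 = 2\<close> m33 E V d1 d2 d3 N1 by (simp only: prod.inject) arith
        then show ?thesis using ex by simp
      next
        case 2
        have "(m33, m23, m12, m13, m22) = Avec n 9" unfolding Avec_vals
          using 2 \<open>N3 = 2\<close> m33 E V d1 d2 d3 N1 by (simp only: prod.inject) arith
        then show ?thesis using ex by simp
      next
        case 3
        have "(m33, m23, m12, m13, m22) = Avec n 7" unfolding Avec_vals
          using 3 \<open>N3 = 2\<close> m33 E V d1 d2 d3 N1 by (simp only: prod.inject) arith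
        then show ?thesis using ex by simp
      next
        case 4
        have "(m33, m23, m12, m13, m22) = Avec n 6" unfolding Avec_vals
          using 4 \<open>N3 = 2\<close> m33 E V d1 d2 d3 N1 by (simp only: prod.inject) arith
        then show ?thesis using ex by simp
      next
        case 5
        have "(m33, m23, m12, m13, m22) = Avec n 5" unfolding Avec_vals
          using 5 \<open>N3 = 2\<close> m33 E V d1 d2 d3 N1 by (simp only: prod.inject) arith
        then show ?thesis using ex by simp
      qed
    next
      assume m33: "m33 = 1"
      consider "m13 = 0" | "m13 = 1" | "m13 = 2" | "m13 = 3" | "m13 = 4" using d1 N1 3 by linarith
      then show ?thesis
      proof cases
        case 1
        have "(m33, m23, m12, m13, m22) = Avec n 13" unfolding Avec_vals
          using 1 \<open>N3 = 2\<close> m33 E V d1 d2 d3 N1 by (simp only: prod.inject) arith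
        then show ?thesis using ex by simp
      next
        case 2
        have "(m33, m23, m12, m13, m22) = Avec n 12" unfolding Avec_vals
          using 2 \<open>N3 = 2\<close> m33 E V d1 d2 d3 N1 by (simp only: prod.inject) arith
        then show ?thesis using ex by simp
      next
        case 3
        have "(m33, m23, m12, m13, m22) = Avec n 10" unfolding Avec_vals
          using 3 \<open>N3 = 2\<close> m33 E V d1 d2 d3 N1 by (simp only: prod.inject) arith
        then show ?thesis using ex by simp
      next
        case 4
        have "(m33, m23, m12, m13, m22) = Avec n 8" unfolding Avec_vals
          using 4 \<open>N3 = 2\<close> m33 E V d1 d2 d3 N1 by (simp only: prod.inject) arith
        then show ?thesis using ex by simp
      next
        case 5
        have "m12 = 0" "m23 = 0" using 5 \<open>N3 = 2\<close> m33 d1 d3 N1 by linarith+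
        then have "N2 = 0 \<or> N1 + N3 = 0" using conn by blast
        then show ?thesis using 5 \<open>N3 = 2\<close> m33 E V d1 d2 d3 N1 n by linarith
      qed
    qed
  qed
qed

lemma mlo: "(0::real) \<le> a \<Longrightarrow> l \<le> c \<Longrightarrow> a * l \<le> a * c"
  by (rule mult_left_mono)

lemma T_bound:
  assumes G: "T \<in> CT n" and n: "n \<ge> 13" and nA: "\<forall>k\<in>{1..13}. T \<notin> A n k" and nO: "T \<notin> Omega n"
  shows "(real n - 1) * sqrt 8 + 2 * (sqrt 18 - sqrt 8) + 5 * (sqrt 13 - sqrt 8) + 5 * (sqrt 5 - sqrt 8) < sombor T"
proof -
  note M = master[OF G n]
  note S = sqrt_bounds
  have notA: "\<not> (n_deg T 4 = 0 \<and> n_deg T 3 \<le> 2)"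
  proof
    assume h: "n_deg T 4 = 0 \<and> n_deg T 3 \<le> 2"
    have z: "m_deg T 1 4 = 0" "m_deg T 2 4 = 0" "m_deg T 3 4 = 0" "m_deg T 4 4 = 0"
      using M(7) h by simp_all
    have "\<exists>k\<in>{1..13}. (m_deg T 3 3, m_deg T 2 3, m_deg T 1 2, m_deg T 1 3, m_deg T 2 2) = Avec n k"
    proof (rule classify[of n "m_deg T 1 2" "m_deg T 1 3" "m_deg T 2 2" "m_deg T 2 3" "m_deg T 3 3" "n_deg T 1" "n_deg T 2" "n_deg T 3"])
      show "n \<ge> 13" by fact
      show "m_deg T 1 2 + m_deg T 1 3 + m_deg T 2 2 + m_deg T 2 3 + m_deg T 3 3 + 1 = n"
        using M(2) M(8) z by simp
      show "n_deg T 1 + n_deg T 2 + n_deg T 3 = n" using M(3) h by simp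
      show "n_deg T 1 = m_deg T 1 2 + m_deg T 1 3" using M(4) M(8) z by simp
      show "2 * n_deg T 2 = m_deg T 1 2 + 2 * m_deg T 2 2 + m_deg T 2 3" using M(5) z by simp
      show "3 * n_deg T 3 = m_deg T 1 3 + m_deg T 2 3 + 2 * m_deg T 3 3" using M(6) z by simp
      show "n_deg T 3 \<le> 2" using h by simp
      show "n_deg T 3 \<le> 1 \<Longrightarrow> m_deg T 3 3 = 0" by (rule M(9))
      show "n_deg T 3 = 2 \<Longrightarrow> m_deg T 3 3 \<le> 1" by (rule M(10))
      show "m_deg T 1 2 = 0 \<Longrightarrow> m_deg T 2 3 = 0 \<Longrightarrow> n_deg T 2 = 0 \<or> n_deg T 1 + n_deg T 3 = 0"
        using M(13) z h by simp
    qed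
    then obtain k where k: "k \<in> {1..13}" "mvec T = Avec n k" unfolding mvec_def by blast
    have "T \<in> A n k" unfolding A_def using G h M(14) k(2) by simp
    then show False using nA k(1) by blast
  qed
  have r2: "real (m_deg T 1 1) + real (m_deg T 1 2) + real (m_deg T 1 3) + real (m_deg T 1 4) +
     real (m_deg T 2 2) + real (m_deg T 2 3) + real (m_deg T 2 4) + real (m_deg T 3 3) +
     real (m_deg T 3 4) + real (m_deg T 4 4) + 1 = real n"
    using arg_cong[OF M(2), of real] by simp
  have r3: "real (n_deg T 1) + real (n_deg T 2) + real (n_deg T 3) + real (n_deg T 4) = real n"
    using arg_cong[OF M(3), of real] by simp
  have r4: "real (n_deg T 1) = 2 * real (m_deg T 1 1) + real (m_deg T 1 2) + real (m_deg T 1 3) + real (m_deg T 1 4)"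
    using arg_cong[OF M(4), of real] by simp
  have r5: "2 * real (n_deg T 2) = real (m_deg T 1 2) + 2 * real (m_deg T 2 2) + real (m_deg T 2 3) + real (m_deg T 2 4)"
    using arg_cong[OF M(5), of real] by simp
  have r6: "3 * real (n_deg T 3) = real (m_deg T 1 3) + real (m_deg T 2 3) + 2 * real (m_deg T 3 3) + real (m_deg T 3 4)"
    using arg_cong[OF M(6), of real] by simp
  have r7: "4 * real (n_deg T 4) = real (m_deg T 1 4) + real (m_deg T 2 4) + real (m_deg T 3 4) + 2 * real (m_deg T 4 4)"
    using arg_cong[OF M(7), of real] by simp
  have r8: "real (m_deg T 1 1) = 0" using M(8) by simp
  have nn: "0 \<le> real (m_deg T 1 2)" "0 \<le> real (m_deg T 1 3)" "0 \<le> real (m_deg T 1 4)"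
    "0 \<le> real (m_deg T 2 2)" "0 \<le> real (m_deg T 2 3)" "0 \<le> real (m_deg T 2 4)"
    "0 \<le> real (m_deg T 3 3)" "0 \<le> real (m_deg T 3 4)" "0 \<le> real (m_deg T 4 4)"
    "0 \<le> real (n_deg T 1)" "0 \<le> real (n_deg T 2)" "0 \<le> real (n_deg T 3)" "0 \<le> real (n_deg T 4)"
    by simp_all
  have c1: "-(592361 / 1000000) \<le> sqrt 5 - sqrt 8" using S by argo
  have c2: "(333849 / 1000000) \<le> sqrt 10 - sqrt 8" using S by argo
  have c3: "(1294677 / 1000000) \<le> sqrt 17 - sqrt 8" using S by argo
  have c4: "(777123 / 1000000) \<le> sqrt 13 - sqrt 8" using S by argo
  have c5: "(1643707 / 1000000) \<le> sqrt 20 - sqrt 8" using S by argo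
  have c6: "(1414212 / 1000000) \<le> sqrt 18 - sqrt 8" using S by argo
  have c7: "(2171572 / 1000000) \<le> sqrt 25 - sqrt 8" unfolding S(19) using S(6) by argo
  have c8: "(2828426 / 1000000) \<le> sqrt 32 - sqrt 8" using S by argo
  note c = c1 c2 c3 c4 c5 c6 c7 c8
  note b = mlo[OF of_nat_0_le_iff[of "m_deg T 1 2"] c(1)]
    mlo[OF of_nat_0_le_iff[of "m_deg T 1 3"] c(2)]
    mlo[OF of_nat_0_le_iff[of "m_deg T 1 4"] c(3)]
    mlo[OF of_nat_0_le_iff[of "m_deg T 2 3"] c(4)]
    mlo[OF of_nat_0_le_iff[of "m_deg T 2 4"] c(5)]
    mlo[OF of_nat_0_le_iff[of "m_deg T 3 3"] c(6)]
    mlo[OF of_nat_0_le_iff[of "m_deg T 3 4"] c(7)]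
    mlo[OF of_nat_0_le_iff[of "m_deg T 4 4"] c(8)]
  have so: "sombor T = (real n - 1) * sqrt 8 +
    (real (m_deg T 1 1) * (sqrt 2 - sqrt 8) + real (m_deg T 1 2) * (sqrt 5 - sqrt 8) +
     real (m_deg T 1 3) * (sqrt 10 - sqrt 8) + real (m_deg T 1 4) * (sqrt 17 - sqrt 8) +
     real (m_deg T 2 3) * (sqrt 13 - sqrt 8) + real (m_deg T 2 4) * (sqrt 20 - sqrt 8) +
     real (m_deg T 3 3) * (sqrt 18 - sqrt 8) + real (m_deg T 3 4) * (sqrt 25 - sqrt 8) +
     real (m_deg T 4 4) * (sqrt 32 - sqrt 8))" using so_form[OF G n] .
  define L where "L = real (m_deg T 1 2) * (-(592361 / 1000000)) + real (m_deg T 1 3) * (333849 / 1000000)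
    + real (m_deg T 1 4) * (1294677 / 1000000) + real (m_deg T 2 3) * (777123 / 1000000) + real (m_deg T 2 4) * (1643707 / 1000000)
    + real (m_deg T 3 3) * (1414212 / 1000000) + real (m_deg T 3 4) * (2171572 / 1000000) + real (m_deg T 4 4) * (2828426 / 1000000)"
  have low: "(real n - 1) * sqrt 8 + L \<le> sombor T" unfolding so L_def using b r8 by simp
  have rhs: "2 * (sqrt 18 - sqrt 8) + 5 * (sqrt 13 - sqrt 8) + 5 * (sqrt 5 - sqrt 8) \<le> (3752300 / 1000000)"
    using S by argo
  have key: "(3752300 / 1000000) < L"
  proof -
    consider "n_deg T 4 \<ge> 2" | "n_deg T 4 = 1" | "n_deg T 4 = 0" "n_deg T 3 \<ge> 4"
      | "n_deg T 4 = 0" "n_deg T 3 = 3" using notA by linarith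
    then show ?thesis
    proof cases
      case 1
      then have "real (n_deg T 4) \<ge> 2" by simp
      then show ?thesis unfolding L_def using r2 r3 r4 r5 r6 r7 r8 nn by argo
    next
      case 2
      then have "real (n_deg T 4) = 1" "real (m_deg T 4 4) = 0" using M(12) by simp_all
      then show ?thesis unfolding L_def using r2 r3 r4 r5 r6 r7 r8 nn by argo
    next
      case 3
      then have "real (n_deg T 4) = 0" "real (n_deg T 3) \<ge> 4" by simp_all
      then show ?thesis unfolding L_def using r2 r3 r4 r5 r6 r7 r8 nn by argo
    next
      case 4
      have m33: "m_deg T 3 3 \<le> 2" using M(11) 4 by simp
      have z: "m_deg T 1 4 = 0" "m_deg T 2 4 = 0" "m_deg T 3 4 = 0" "m_deg T 4 4 = 0"
        using M(7) 4 by simp_all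
      have "m_deg T 3 3 \<le> 1 \<or> m_deg T 1 3 \<ge> 1"
      proof (rule ccontr)
        assume "\<not> (m_deg T 3 3 \<le> 1 \<or> m_deg T 1 3 \<ge> 1)"
        then have m: "m_deg T 3 3 = 2" "m_deg T 1 3 = 0" using m33 by simp_all
        have "T \<in> Omega n" unfolding Omega_def
          using G 4 m z M(2) M(3) M(4) M(5) M(6) M(8) n by simp arith
        then show False using nO by blast
      qed
      then have "real (m_deg T 3 3) \<le> 1 \<or> real (m_deg T 1 3) \<ge> 1" by simp
      moreover have "real (n_deg T 4) = 0" "real (n_deg T 3) = 3" "real (m_deg T 3 3) \<le> 2" using 4 m33 by simp_all
      ultimately show ?thesis unfolding L_def using r2 r3 r4 r5 r6 r7 r8 nn by argo
    qed
  qed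
  show ?thesis using low rhs key by argo
qed

theorem theorem3p3:
  fixes n :: nat and T1 T2 T3 T4 T5 T6 T7 T8 T9 T10 T11 T12 T13 T14 T :: "'a graph"
  assumes "n \<ge> 13"
    and "T1 \<in> A n 1" and "T2 \<in> A n 4" and "T3 \<in> A n 3" and "T4 \<in> A n 2"
    and "T5 \<in> A n 13" and "T6 \<in> A n 11" and "T7 \<in> A n 12" and "T8 \<in> A n 9"
    and "T9 \<in> A n 10" and "T10 \<in> A n 7" and "T11 \<in> A n 8" and "T12 \<in> A n 6"
    and "T13 \<in> A n 5" and "T14 \<in> Omega n"
    and "T \<in> CT n" and "T \<notin> (\<Union>i\<in>{1..13}. A n i) \<union> Omega n"
  shows "sombor T1 < sombor T2 \<and> sombor T2 < sombor T3 \<and> sombor T3 < sombor T4 \<and>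
         sombor T4 < sombor T5 \<and> sombor T5 < sombor T6 \<and> sombor T6 < sombor T7 \<and>
         sombor T7 < sombor T8 \<and> sombor T8 < sombor T9 \<and> sombor T9 < sombor T10 \<and>
         sombor T10 < sombor T11 \<and> sombor T11 < sombor T12 \<and> sombor T12 < sombor T13 \<and>
         sombor T13 < sombor T14 \<and> sombor T14 < sombor T"
proof -
  note n = assms(1)
  note S = sqrt_bounds
  note e1 = A_form[OF assms(2) n A_mvec[OF assms(2), unfolded Avec_vals]]
  note e2 = A_form[OF assms(3) n A_mvec[OF assms(3), unfolded Avec_vals]]
  note e3 = A_form[OF assms(4) n A_mvec[OF assms(4), unfolded Avec_vals]]
  note e4 = A_form[OF assms(5) n A_mvec[OF assms(5), unfolded Avec_vals]]
  note e5 = A_form[OF assms(6) n A_mvec[OF assms(6), unfolded Avec_vals]]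
  note e6 = A_form[OF assms(7) n A_mvec[OF assms(7), unfolded Avec_vals]]
  note e7 = A_form[OF assms(8) n A_mvec[OF assms(8), unfolded Avec_vals]]
  note e8 = A_form[OF assms(9) n A_mvec[OF assms(9), unfolded Avec_vals]]
  note e9 = A_form[OF assms(10) n A_mvec[OF assms(10), unfolded Avec_vals]]
  note e10 = A_form[OF assms(11) n A_mvec[OF assms(11), unfolded Avec_vals]]
  note e11 = A_form[OF assms(12) n A_mvec[OF assms(12), unfolded Avec_vals]]
  note e12 = A_form[OF assms(13) n A_mvec[OF assms(13), unfolded Avec_vals]]
  note e13 = A_form[OF assms(14) n A_mvec[OF assms(14), unfolded Avec_vals]]
  note e14 = Omega_form[OF assms(15) n]
  have nA: "\<forall>k\<in>{1..13}. T \<notin> A n k" using assms(17) by blast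
  have nO: "T \<notin> Omega n" using assms(17) by blast
  note eT = T_bound[OF assms(16) n nA nO]
  show ?thesis
  proof (intro conjI)
    show "sombor T1 < sombor T2" using e1 e2 S by (simp; argo)
    show "sombor T2 < sombor T3" using e2 e3 S by (simp; argo)
    show "sombor T3 < sombor T4" using e3 e4 S by (simp; argo)
    show "sombor T4 < sombor T5" using e4 e5 S by (simp; argo)
    show "sombor T5 < sombor T6" using e5 e6 S by (simp; argo)
    show "sombor T6 < sombor T7" using e6 e7 S by (simp; argo)
    show "sombor T7 < sombor T8" using e7 e8 S by (simp; argo)
    show "sombor T8 < sombor T9" using e8 e9 S by (simp; argo)
    show "sombor T9 < sombor T10" using e9 e10 S by (simp; argo)
    show "sombor T10 < sombor T11" using e10 e11 S by (simp; argo)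
    show "sombor T11 < sombor T12" using e11 e12 S by (simp; argo)
    show "sombor T12 < sombor T13" using e12 e13 S by (simp; argo)
    show "sombor T13 < sombor T14" using e13 e14 S by (simp; argo)
    show "sombor T14 < sombor T" using e14 eT by simp
  qed
qed

end
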